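(* Consider the parabola $y=\frac{a_N}{a_D}x^2+\frac{b_N}{b_D}x+c$, where $\frac{a_N}{a_D}\ne0$ and $\frac{b_N}{b_D}$ are reduced fractions with positive denominators and $c\in\mathbb R$, and let $\bar H=\mathrm{lcm}(a_D,b_D)$. Its horizontal period $H$ equals $\bar H$ or $\bar H/2$; precisely: (i) if $a_D\equiv0\pmod4$, then $H=\mathrm{lcm}(a_D/2,b_D)$; (ii) if $a_D\equiv2\pmod4$ and $b_D\equiv2\pmod4$, then $H=\mathrm{lcm}(a_D/2,b_D/2)$; (iii) in all other cases, $H=\mathrm{lcm}(a_D,b_D)$.
   Context: The horizontal period $H$ of the parabola $y=\alpha x^2+\beta x+c$ (with $\alpha=a_N/a_D$, $\beta=b_N/b_D$) is the smallest positive integer $H$ such that $z=2\alpha H$ and $w=\alpha H^2+\beta H$ are both integers; equivalently, the smallest positive integer $H$ for which there is an affine map of the form $(x,y)\mapsto(x+H,\ zx+y+w)$ mapping both $\mathbb Z^2$ and the parabola onto themselves. *)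

theory Defs
  imports Complex_Main
begin

text \<open>Horizontal period of the parabola y = alpha x^2 + beta x + c: the smallest positive
integer H such that 2 alpha H and alpha H^2 + beta H are both integers.
(The constant term c plays no role.)\<close>
definition horizontal_period :: "real \<Rightarrow> real \<Rightarrow> nat" where
  "horizontal_period \<alpha> \<beta> =
     (LEAST H::nat. H > 0 \<and> 2 * \<alpha> * real H \<in> \<int> \<and> \<alpha> * (real H)^2 + \<beta> * real H \<in> \<int>)"

end

theory Submission
  imports Defs
begin

definition Cd :: "int \<Rightarrow> int \<Rightarrow> int \<Rightarrow> int \<Rightarrow> int \<Rightarrow> bool" where
  "Cd a d b e H \<longleftrightarrow> d dvd 2*H \<and> d*e dvd a*e*H^2 + b*d*H"

lemma int_frac:
  fixes x y :: int assumes "y > 0"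
  shows "(real_of_int x / real_of_int y \<in> \<int>) \<longleftrightarrow> y dvd x"
proof
  assume "real_of_int x / real_of_int y \<in> \<int>"
  then obtain k where "real_of_int x / real_of_int y = of_int k" by (auto elim: Ints_cases)
  hence "real_of_int x = of_int k * of_int y" using assms by (simp add: field_simps)
  hence "x = k*y" by (metis of_int_eq_iff of_int_mult)
  thus "y dvd x" by simp
next
  assume "y dvd x" then obtain k where "x = y*k" ..
  thus "real_of_int x / real_of_int y \<in> \<int>" using assms by simp
qed

lemma cond_iff:
  fixes a d b e :: int and n :: nat
  assumes "d > 0" "e > 0" "coprime a d"
  shows "(2 * (real_of_int a / real_of_int d) * real n \<in> \<int> \<and>
          (real_of_int a / real_of_int d) * (real n)^2 + (real_of_int b / real_of_int e) * real n \<in> \<int>)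
     \<longleftrightarrow> Cd a d b e (int n)"
proof -
  have 1: "2 * (real_of_int a / real_of_int d) * real n = real_of_int (2*int n*a) / real_of_int d"
    by simp
  have 2: "(real_of_int a / real_of_int d) * (real n)^2 + (real_of_int b / real_of_int e) * real n
      = real_of_int (a*e*(int n)^2 + b*d*int n) / real_of_int (d*e)"
    using assms by (simp add: field_simps)
  have cd: "coprime d a" using assms(3) by (simp add: coprime_commute)
  have 3: "d dvd 2*int n*a \<longleftrightarrow> d dvd 2*int n"
    using coprime_dvd_mult_left_iff[OF cd] by blast
  have A: "real_of_int (2*int n*a) / real_of_int d \<in> \<int> \<longleftrightarrow> d dvd 2*int n"
    using int_frac[OF assms(1)] 3 by blast
  have de: "d*e > 0" using assms by simp
  have B: "real_of_int (a*e*(int n)^2 + b*d*int n) / real_of_int (d*e) \<in> \<int> \<longleftrightarrow> d*e dvd a*e*(int n)^2 + b*d*int n"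
    using int_frac[OF de] by blast
  show ?thesis unfolding 1 2 Cd_def A B ..
qed

lemma C_lcm:
  fixes a d b e :: int assumes "d > 0" "e > 0"
  shows "Cd a d b e (lcm d e)"
proof -
  define m where "m = lcm d e"
  obtain p where p: "m = d*p" unfolding m_def by (meson dvd_lcm1 dvdE)
  obtain q where q: "m = e*q" unfolding m_def by (meson dvd_lcm2 dvdE)
  have "a*e*m^2 = d*e*(a*d*p^2)" by (simp add: p power2_eq_square algebra_simps)
  moreover have "b*d*m = d*e*(b*q)" by (simp add: q algebra_simps)
  ultimately have "a*e*m^2 + b*d*m = d*e*(a*d*p^2) + d*e*(b*q)" by presburger
  hence "a*e*m^2 + b*d*m = d*e*(a*d*p^2 + b*q)" by (simp add: algebra_simps)
  hence "d*e dvd a*e*m^2 + b*d*m" by simp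
  moreover have "d dvd 2*m" using p by simp
  ultimately show ?thesis unfolding Cd_def m_def by simp
qed

lemma C_2:
  fixes a d b e H :: int assumes "d > 0" "e > 0" "coprime b e" "Cd a d b e H"
  shows "e dvd 2*H"
proof -
  from assms(4) have h1: "d dvd 2*H" and h2: "d*e dvd a*e*H^2 + b*d*H" unfolding Cd_def by auto
  obtain k where k: "2*H = d*k" using h1 by blast
  have "2*(a*e*H^2 + b*d*H) = d*(a*e*H*k + 2*b*H)"
    by (simp add: power2_eq_square algebra_simps flip: k)
  moreover have "d*e dvd 2*(a*e*H^2 + b*d*H)" by (rule dvd_mult[OF h2])
  ultimately have "d*e dvd d*(a*e*H*k + 2*b*H)" by simp
  hence "e dvd a*e*H*k + 2*b*H" using assms(1) by simp
  moreover have "e dvd e*(a*H*k)" by simp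
  ultimately have "e dvd (a*e*H*k + 2*b*H) - e*(a*H*k)" by (rule dvd_diff)
  moreover have "(a*e*H*k + 2*b*H) - e*(a*H*k) = (2*H)*b" by (simp add: algebra_simps)
  ultimately have "e dvd (2*H)*b" by simp
  moreover have "coprime e b" using assms(3) by (simp add: coprime_commute)
  ultimately show ?thesis using coprime_dvd_mult_left_iff by blast
qed

lemma C_G:
  fixes a d b e H :: int assumes "d > 0" "e > 0" "coprime b e" "Cd a d b e H" "d dvd H"
  shows "e dvd H"
proof -
  from assms(4) have h2: "d*e dvd a*e*H^2 + b*d*H" unfolding Cd_def by auto
  obtain h where h: "H = d*h" using assms(5) by blast
  have "a*e*H^2 + b*d*H = d*(a*e*H*h + b*H)"
    by (simp add: power2_eq_square algebra_simps h)
  with h2 have "d*e dvd d*(a*e*H*h + b*H)" by simp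
  hence "e dvd a*e*H*h + b*H" using assms(1) by simp
  moreover have "e dvd e*(a*H*h)" by simp
  ultimately have "e dvd (a*e*H*h + b*H) - e*(a*H*h)" by (rule dvd_diff)
  moreover have "(a*e*H*h + b*H) - e*(a*H*h) = H*b" by (simp add: algebra_simps)
  ultimately have "e dvd H*b" by simp
  moreover have "coprime e b" using assms(3) by (simp add: coprime_commute)
  ultimately show ?thesis using coprime_dvd_mult_left_iff by blast
qed

lemma hp_eq:
  fixes a d b e L :: int
  assumes "d > 0" "e > 0" "coprime a d" "L > 0" "Cd a d b e L"
    and "\<And>H. H > 0 \<Longrightarrow> Cd a d b e H \<Longrightarrow> L dvd H"
  shows "int (horizontal_period (real_of_int a / real_of_int d) (real_of_int b / real_of_int e)) = L"
proof -
  have "horizontal_period (real_of_int a / real_of_int d) (real_of_int b / real_of_int e)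
      = (LEAST n::nat. n > 0 \<and> Cd a d b e (int n))"
    unfolding horizontal_period_def using cond_iff[OF assms(1-3)] by (simp add: mult.assoc)
  also have "\<dots> = nat L"
  proof (rule Least_equality)
    show "nat L > 0 \<and> Cd a d b e (int (nat L))" using assms by simp
  next
    fix n :: nat assume "n > 0 \<and> Cd a d b e (int n)"
    hence "L dvd int n" "int n > 0" using assms(6) by auto
    hence "L \<le> int n" by (simp add: zdvd_imp_le)
    thus "nat L \<le> n" by simp
  qed
  finally show ?thesis using assms(4) by simp
qed



lemma half_dvd:
  fixes d H :: int assumes "d dvd 2*H" "d = 2*d'"
  shows "d' dvd H"
  using assms by (metis dvd_mult_cancel_left zero_neq_numeral)

lemma d2_dvd:
  fixes d H :: int assumes "d mod 4 = 2" "d dvd 2*H" "even H"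
  shows "d dvd H"
proof -
  obtain k where k: "2*H = d*k" using assms(2) by blast
  obtain h where h: "H = 2*h" using assms(3) by blast
  define t where "t = d div 4"
  have dt: "d = 4*t + 2" using assms(1) div_mult_mod_eq[of d 4] unfolding t_def by linarith
  have "4*h = (4*t+2)*k" using k h dt by simp
  hence hk: "2*h = (2*t+1)*k" by (simp add: algebra_simps)
  have "even k"
  proof (rule ccontr)
    assume "odd k"
    hence "odd ((2*t+1)*k)" by simp
    with hk show False by (metis dvd_triv_left)
  qed
  then obtain j where j: "k = 2*j" by blast
  have "H = d*j" using hk h dt j by (simp add: algebra_simps)
  thus ?thesis by simp
qed

lemma odd_of_coprime:
  fixes a d :: int assumes "coprime a d" "even d" shows "odd a"
  using assms by (metis coprime_common_divisor odd_one)

lemma case_odd: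
  fixes a d b e H :: int
  assumes "d > 0" "e > 0" "coprime b e" "odd d" "Cd a d b e H"
  shows "lcm d e dvd H"
proof -
  have "d dvd 2*H" using assms(5) unfolding Cd_def by simp
  moreover have "coprime d 2" using assms(4) by (simp add: coprime_commute)
  ultimately have dH: "d dvd H" using coprime_dvd_mult_right_iff by blast
  have "e dvd H" using C_G[OF assms(1-3,5) dH] .
  with dH show ?thesis by simp
qed

lemma case_2:
  fixes a d b e H :: int
  assumes "d > 0" "e > 0" "coprime a d" "coprime b e" "d mod 4 = 2" "e mod 4 \<noteq> 2" "Cd a d b e H"
  shows "lcm d e dvd H"
proof -
  have d2H: "d dvd 2*H" and X: "d*e dvd a*e*H^2 + b*d*H" using assms(7) unfolding Cd_def by auto
  have ed: "even d" using assms(5) by (metis dvd_mod_iff even_numeral mod_mod_cancel dvd_mod_imp_dvd one_add_one dvd_refl)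
  have "even H"
  proof (cases "even e")
    case True
    hence "e mod 4 = 0" using assms(6) by presburger
    hence "4 dvd e" by presburger
    moreover have "e dvd 2*H" using C_2[OF assms(1,2,4,7)] .
    ultimately have "4 dvd 2*H" by (rule dvd_trans)
    thus ?thesis by presburger
  next
    case False
    have "2 dvd d*e" using ed by simp
    hence "2 dvd a*e*H^2 + b*d*H" using X by (rule dvd_trans)
    moreover have "2 dvd b*d*H" using ed by simp
    ultimately have "2 dvd a*e*H^2" using dvd_add_left_iff by blast
    moreover have "odd a" using odd_of_coprime[OF assms(3) ed] .
    ultimately show ?thesis using False by simp
  qed
  hence dH: "d dvd H" using d2_dvd[OF assms(5) d2H] by simp
  have "e dvd H" using C_G[OF assms(1,2,4,7) dH] .
  with dH show ?thesis by simp
qed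

lemma case_4:
  fixes a d b e H :: int
  assumes "d > 0" "e > 0" "coprime b e" "d mod 4 = 0"
  shows "Cd a d b e (lcm (d div 2) e)"
    and "Cd a d b e H \<Longrightarrow> lcm (d div 2) e dvd H"
proof -
  define d' where "d' = d div 2"
  have dd: "d = 2*d'" using assms(4) unfolding d'_def by presburger
  have ed': "even d'" using assms(4) unfolding d'_def by presburger
  define L where "L = lcm d' e"
  obtain r where r: "L = d'*r" unfolding L_def by (meson dvd_lcm1 dvdE)
  obtain s where s: "L = e*s" unfolding L_def by (meson dvd_lcm2 dvdE)
  obtain t where t: "L = 2*t" using ed' r by (metis dvd_mult2 dvdE)
  have "a*e*L^2 + b*d*L = a*e*(d'*r)*(2*t) + b*(2*d')*(e*s)"
    by (simp add: power2_eq_square dd flip: r s t)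
  also have "\<dots> = d*e*(a*r*t + b*s)" by (simp add: dd algebra_simps)
  finally have "d*e dvd a*e*L^2 + b*d*L" by simp
  moreover have "d dvd 2*L" using r dd by simp
  ultimately show "Cd a d b e (lcm (d div 2) e)" unfolding Cd_def L_def d'_def by simp
next
  define d' where "d' = d div 2"
  have dd: "d = 2*d'" using assms(4) unfolding d'_def by presburger
  have ed': "even d'" using assms(4) unfolding d'_def by presburger
  have d'0: "d' > 0" using assms(1) dd by simp
  assume C: "Cd a d b e H"
  have d2H: "d dvd 2*H" and X: "d*e dvd a*e*H^2 + b*d*H" using C unfolding Cd_def by auto
  have dH: "d' dvd H" using half_dvd[OF d2H dd] .
  then obtain k where k: "H = d'*k" by blast
  obtain h where h: "H = 2*h" using ed' k by (metis dvd_mult2 dvdE)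
  have "a*e*H^2 = a*e*(d'*k)*(2*h)" by (simp add: power2_eq_square flip: k h)
  hence "a*e*H^2 + b*d*H = d'*(2*e*(a*h*k) + 2*b*H)"
    by (simp add: dd algebra_simps)
  moreover have "d*e = d'*(2*e)" using dd by simp
  ultimately have "d'*(2*e) dvd d'*(2*e*(a*h*k) + 2*b*H)" using X by metis
  hence "2*e dvd 2*e*(a*h*k) + 2*b*H" using d'0 by simp
  hence "2*e dvd 2*(b*H)" by (simp add: dvd_add_right_iff)
  hence "e dvd H*b" by (simp add: mult.commute)
  moreover have "coprime e b" using assms(3) by (simp add: coprime_commute)
  ultimately have "e dvd H" using coprime_dvd_mult_left_iff by blast
  with dH show "lcm (d div 2) e dvd H" unfolding d'_def by simp
qed

lemma case_22:
  fixes a d b e H :: int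
  assumes "d > 0" "e > 0" "coprime a d" "coprime b e" "d mod 4 = 2" "e mod 4 = 2"
  shows "Cd a d b e (lcm (d div 2) (e div 2))"
    and "Cd a d b e H \<Longrightarrow> lcm (d div 2) (e div 2) dvd H"
proof -
  define d' where "d' = d div 2"
  define e' where "e' = e div 2"
  have dd: "d = 2*d'" using assms(5) unfolding d'_def by presburger
  have ee: "e = 2*e'" using assms(6) unfolding e'_def by presburger
  have od: "odd d'" using assms(5) unfolding d'_def by presburger
  have oe: "odd e'" using assms(6) unfolding e'_def by presburger
  have oa: "odd a" using odd_of_coprime[OF assms(3)] dd by simp
  have ob: "odd b" using odd_of_coprime[OF assms(4)] ee by simp
  define L where "L = lcm d' e'"
  have "L dvd d'*e'" unfolding L_def by (simp add: lcm_least)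
  hence oL: "odd L" using od oe by (metis dvd_trans even_mult_iff)
  obtain r where r: "L = d'*r" unfolding L_def by (meson dvd_lcm1 dvdE)
  obtain s where s: "L = e'*s" unfolding L_def by (meson dvd_lcm2 dvdE)
  have "odd r" using oL r by simp
  have "odd s" using oL s by simp
  have "even (a*L*r + b*s)" using oa ob oL \<open>odd r\<close> \<open>odd s\<close> by simp
  then obtain w where w: "a*L*r + b*s = 2*w" by blast
  have "a*e*L^2 + b*d*L = 2*d'*e'*(a*L*r + b*s)"
  proof -
    have "a*e*L^2 = 2*a*e'*L*(d'*r)" by (simp add: ee power2_eq_square flip: r)
    moreover have "b*d*L = 2*b*d'*(e'*s)" by (simp add: dd flip: s)
    ultimately have "a*e*L^2 + b*d*L = 2*a*e'*L*(d'*r) + 2*b*d'*(e'*s)" by (simp only:)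
    also have "\<dots> = 2*d'*e'*(a*L*r + b*s)" by (simp add: algebra_simps)
    finally show ?thesis .
  qed
  also have "\<dots> = d*e*w" using w by (simp add: dd ee)
  finally have "d*e dvd a*e*L^2 + b*d*L" by simp
  moreover have "d dvd 2*L" using r dd by simp
  ultimately show "Cd a d b e (lcm (d div 2) (e div 2))" unfolding Cd_def L_def d'_def e'_def by simp
next
  assume C: "Cd a d b e H"
  have dd: "d = 2*(d div 2)" using assms(5) by presburger
  have ee: "e = 2*(e div 2)" using assms(6) by presburger
  have "d div 2 dvd H" using half_dvd[OF _ dd] C unfolding Cd_def by blast
  moreover have "e div 2 dvd H" using half_dvd[OF C_2[OF assms(1,2,4) C] ee] .
  ultimately show "lcm (d div 2) (e div 2) dvd H" by simp
qed

lemma lcm_choice: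
  fixes a d b e L :: int
  assumes "d > 0" "e > 0" "coprime b e" "L > 0" "Cd a d b e L"
    and "\<And>H. H > 0 \<Longrightarrow> Cd a d b e H \<Longrightarrow> L dvd H"
  shows "L = lcm d e \<or> 2*L = lcm d e"
proof -
  have m0: "lcm d e > 0" using assms by (simp add: lcm_pos_int)
  have "L dvd lcm d e" using assms(6)[OF m0 C_lcm[OF assms(1,2)]] .
  then obtain j where j: "lcm d e = L*j" by blast
  have "d dvd 2*L" using assms(5) unfolding Cd_def by simp
  moreover have "e dvd 2*L" using C_2[OF assms(1-3,5)] .
  ultimately have "lcm d e dvd 2*L" by simp
  then obtain k where k: "2*L = lcm d e * k" by blast
  have "2*L = L*(j*k)" using j k by simp
  hence jk: "j*k = 2" using assms(4) by simp
  have "j > 0" using j m0 assms(4) by (simp add: zero_less_mult_iff)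
  moreover have "j dvd 2" using jk by (metis dvd_triv_left)
  hence "j \<le> 2" by (simp add: zdvd_imp_le)
  ultimately have "j = 1 \<or> j = 2" by auto
  thus ?thesis using j by auto
qed

theorem proposition5:
  fixes aN aD bN bD :: int and c :: real
  assumes "aN \<noteq> 0" and "aD > 0" and "bD > 0"
    and "coprime aN aD" and "coprime bN bD"
  defines "H \<equiv> int (horizontal_period (real_of_int aN / real_of_int aD) (real_of_int bN / real_of_int bD))"
  shows "(H = lcm aD bD \<or> 2 * H = lcm aD bD)
       \<and> (aD mod 4 = 0 \<longrightarrow> H = lcm (aD div 2) bD)
       \<and> (aD mod 4 = 2 \<and> bD mod 4 = 2 \<longrightarrow> H = lcm (aD div 2) (bD div 2))
       \<and> (\<not> (aD mod 4 = 0) \<and> \<not> (aD mod 4 = 2 \<and> bD mod 4 = 2) \<longrightarrow> H = lcm aD bD)"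
proof -
  note ab = assms(2,3,4,5)
  have key: "H = L \<and> (L = lcm aD bD \<or> 2*L = lcm aD bD)"
    if "L > 0" "Cd aN aD bN bD L" "\<And>H. H > 0 \<Longrightarrow> Cd aN aD bN bD H \<Longrightarrow> L dvd H" for L
    using hp_eq[OF assms(2,3,4) that] lcm_choice[OF assms(2,3,5) that] unfolding H_def by blast
  consider (A) "aD mod 4 = 0" | (B) "aD mod 4 = 2 \<and> bD mod 4 = 2"
    | (C) "\<not> (aD mod 4 = 0) \<and> \<not> (aD mod 4 = 2 \<and> bD mod 4 = 2)" by blast
  then show ?thesis
  proof cases
    case A
    have "aD div 2 > 0" using assms(2) A by presburger
    hence "lcm (aD div 2) bD > 0" using assms(3) by (simp add: lcm_pos_int)
    from key[OF this case_4(1)[OF assms(2,3,5) A] case_4(2)[OF assms(2,3,5) A]]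
    show ?thesis using A by auto
  next
    case B
    have "aD div 2 > 0" "bD div 2 > 0" using assms(2,3) B by presburger+
    hence "lcm (aD div 2) (bD div 2) > 0" by (simp add: lcm_pos_int)
    from key[OF this case_22(1)[OF ab] case_22(2)[OF ab]] B
    show ?thesis by auto
  next
    case C
    have m0: "lcm aD bD > 0" using assms(2,3) by (simp add: lcm_pos_int)
    have "\<And>H. H > 0 \<Longrightarrow> Cd aN aD bN bD H \<Longrightarrow> lcm aD bD dvd H"
    proof -
      fix H assume "H > 0" "Cd aN aD bN bD H"
      show "lcm aD bD dvd H"
      proof (cases "odd aD")
        case True
        show ?thesis using case_odd[OF assms(2,3,5) True \<open>Cd aN aD bN bD H\<close>] by simp
      next
        case False
        hence "aD mod 4 = 2" "bD mod 4 \<noteq> 2" using C by presburger+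
        then show ?thesis using case_2[OF ab] \<open>Cd aN aD bN bD H\<close> by blast
      qed
    qed
    from key[OF m0 C_lcm[OF assms(2,3)] this] C show ?thesis by auto
  qed
qed

end
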